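(* Let $m\equiv3\pmod8$ and $\mathfrak n_m^{(p_+,p_-)}=(\mathfrak v_m^+)^{p_+}\oplus(\mathfrak v_m^-)^{p_-}\oplus\mathbb R^m$. If ${\rm Lag}(\mathfrak n_m^{(p_+,p_-)})\neq\emptyset$, then $p_+=p_-$.
   Context: $C(m)$ is the real Clifford algebra of $\mathbb R^m$ (relations $z^2=-\langle z,z\rangle1$). For $m\equiv3\pmod4$, with $z_1,\dots,z_m$ a fixed orthonormal basis and $K_m=J_{z_1}\cdots J_{z_m}$, there are two irreducible $C(m)$-modules up to isomorphism, $\mathfrak v_m^\pm$, on which $K_m$ acts as $\pm\mathrm{Id}$. Modules carry inner products making each $J_z$ skew-symmetric, and $\mathfrak n_m^{(p_+,p_-)}$ is the Lie algebra of Heisenberg type with $\mathbb R^m$ central and $\langle z,[u,v]\rangle=(J_zu,v)$ on $\mathfrak v=(\mathfrak v_m^+)^{p_+}\oplus(\mathfrak v_m^-)^{p_-}$. ${\rm Lag}(\mathfrak n)$ is the set of subspaces $\mathcal L\subset\mathfrak v$ with $[\mathcal L,\mathcal L]=0$ and $\dim\mathcal L=\frac12\dim\mathfrak v$. *)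

theory Defs
  imports "HOL-Analysis.Analysis"
begin

text \<open>A (real) C(m)-module with admissible inner product: J i is the action of the
  i-th vector z_(i+1) of the fixed orthonormal basis of R^m (i < m).  The relations
  z^2 = -<z,z> 1 are equivalent to J_i^2 = -Id and J_i J_j = - J_j J_i (i ~= j);
  J_z = sum_i z_i J_i.\<close>
definition clifford_module :: "nat \<Rightarrow> (nat \<Rightarrow> 'v::euclidean_space \<Rightarrow> 'v) \<Rightarrow> bool" where
  "clifford_module m J \<longleftrightarrow>
     (\<forall>i<m. linear (J i)) \<and>
     (\<forall>i<m. \<forall>u. J i (J i u) = - u) \<and>
     (\<forall>i<m. \<forall>j<m. i \<noteq> j \<longrightarrow> (\<forall>u. J i (J j u) = - J j (J i u))) \<and>
     (\<forall>i<m. \<forall>u w. inner (J i u) w = - inner u (J i w))"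

definition K_op :: "nat \<Rightarrow> (nat \<Rightarrow> 'v \<Rightarrow> 'v) \<Rightarrow> 'v \<Rightarrow> 'v" where
  "K_op m J = foldr (\<circ>) (map J [0..<m]) id"

definition invariant_subspace :: "nat \<Rightarrow> (nat \<Rightarrow> 'v::euclidean_space \<Rightarrow> 'v) \<Rightarrow> 'v set \<Rightarrow> bool" where
  "invariant_subspace m J W \<longleftrightarrow> subspace W \<and> (\<forall>i<m. J i ` W \<subseteq> W)"

definition irreducible_submodule :: "nat \<Rightarrow> (nat \<Rightarrow> 'v::euclidean_space \<Rightarrow> 'v) \<Rightarrow> 'v set \<Rightarrow> bool" where
  "irreducible_submodule m J W \<longleftrightarrow> invariant_subspace m J W \<and> W \<noteq> {0} \<and>
     (\<forall>U. invariant_subspace m J U \<and> U \<subseteq> W \<longrightarrow> U = {0} \<or> U = W)"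

text \<open>The module 'v is (v_m^+)^p_plus + (v_m^-)^p_minus: an orthogonal direct sum of
  p_plus irreducible submodules on which K_m = Id and p_minus on which K_m = -Id.\<close>
definition module_type :: "nat \<Rightarrow> (nat \<Rightarrow> 'v::euclidean_space \<Rightarrow> 'v) \<Rightarrow> nat \<Rightarrow> nat \<Rightarrow> bool" where
  "module_type m J p_plus p_minus \<longleftrightarrow>
     (\<exists>W :: nat \<Rightarrow> 'v set.
        (\<forall>k < p_plus + p_minus. irreducible_submodule m J (W k)) \<and>
        (\<forall>k < p_plus. \<forall>u \<in> W k. K_op m J u = u) \<and>
        (\<forall>k. p_plus \<le> k \<and> k < p_plus + p_minus \<longrightarrow> (\<forall>u \<in> W k. K_op m J u = - u)) \<and>
        (\<forall>k < p_plus + p_minus. \<forall>l < p_plus + p_minus. k \<noteq> l \<longrightarrow>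
            (\<forall>u \<in> W k. \<forall>w \<in> W l. inner u w = 0)) \<and>
        span (\<Union>k < p_plus + p_minus. W k) = UNIV)"

text \<open>Lie bracket of the H-type algebra on v: [u,w] in R^m (coordinates w.r.t. z_1..z_m,
  represented as nat => real supported on {0..<m}), with <z,[u,w]> = (J_z u, w).\<close>
definition heis_bracket :: "nat \<Rightarrow> (nat \<Rightarrow> 'v::euclidean_space \<Rightarrow> 'v) \<Rightarrow> 'v \<Rightarrow> 'v \<Rightarrow> nat \<Rightarrow> real" where
  "heis_bracket m J u w = (\<lambda>i. if i < m then inner (J i u) w else 0)"

definition Lag :: "nat \<Rightarrow> (nat \<Rightarrow> 'v::euclidean_space \<Rightarrow> 'v) \<Rightarrow> 'v set set" where
  "Lag m J = {L. subspace L \<and> (\<forall>u\<in>L. \<forall>w\<in>L. heis_bracket m J u w = (\<lambda>_. 0)) \<and>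
                 2 * dim L = DIM('v)}"

end

theory Submission
  imports Defs
begin

definition oproj :: "'v::euclidean_space set \<Rightarrow> 'v \<Rightarrow> 'v" where
  "oproj S x = (SOME y. y \<in> S \<and> (\<forall>w\<in>S. inner (x - y) w = 0))"

lemma oproj_ex:
  fixes S :: "'v::euclidean_space set"
  assumes "subspace S"
  shows "\<exists>y. y \<in> S \<and> (\<forall>w\<in>S. inner (x - y) w = 0)"
proof -
  obtain y z where "y \<in> span S" "\<And>w. w \<in> span S \<Longrightarrow> orthogonal z w" "x = y + z"
    using orthogonal_subspace_decomp_exists[of S x] by blast
  note yz = this
  have "y \<in> S" using yz(1) assms by (metis span_eq_iff)
  moreover have "inner (x - y) w = 0" if "w \<in> S" for w
  proof -
    have "orthogonal z w" using yz(2) span_base[OF that] .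
    then show ?thesis using yz(3) by (simp add: orthogonal_def)
  qed
  ultimately show ?thesis by blast
qed

lemma oproj:
  assumes "subspace S"
  shows "oproj S x \<in> S" "\<And>w. w \<in> S \<Longrightarrow> inner (x - oproj S x) w = 0"
  using someI_ex[OF oproj_ex[OF assms, of x]] unfolding oproj_def by auto

lemma oproj_unique:
  assumes "subspace S" "y \<in> S" "\<And>w. w \<in> S \<Longrightarrow> inner (x - y) w = 0"
  shows "oproj S x = y"
proof -
  have d: "oproj S x - y \<in> S" using oproj[OF assms(1)] assms by (simp add: subspace_diff)
  have "inner (oproj S x - y) w = 0" if "w \<in> S" for w
  proof -
    have "oproj S x - y = (x - y) - (x - oproj S x)" by simp
    then show ?thesis using oproj(2)[OF assms(1) that] assms(3)[OF that]
      by (simp add: inner_diff_left)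
  qed
  from this[OF d] show ?thesis by simp
qed

lemma oproj_id: "subspace S \<Longrightarrow> x \<in> S \<Longrightarrow> oproj S x = x"
  by (rule oproj_unique) auto

lemma oproj_linear:
  assumes "subspace S"
  shows "linear (oproj S)"
proof (rule linearI)
  fix x y
  show "oproj S (x + y) = oproj S x + oproj S y"
  proof (rule oproj_unique[OF assms])
    show "oproj S x + oproj S y \<in> S"
      using oproj(1)[OF assms] assms by (simp add: subspace_add)
    fix w assume w: "w \<in> S"
    have e: "x + y - (oproj S x + oproj S y) = (x - oproj S x) + (y - oproj S y)" by simp
    show "inner (x + y - (oproj S x + oproj S y)) w = 0"
      unfolding e inner_add_left using oproj(2)[OF assms w] by simp
  qed
next
  fix c :: real and x
  show "oproj S (c *\<^sub>R x) = c *\<^sub>R oproj S x"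
  proof (rule oproj_unique[OF assms])
    show "c *\<^sub>R oproj S x \<in> S"
      using oproj(1)[OF assms] assms by (simp add: subspace_scale)
    fix w assume w: "w \<in> S"
    have e: "c *\<^sub>R x - c *\<^sub>R oproj S x = c *\<^sub>R (x - oproj S x)" by (simp add: scaleR_diff_right)
    show "inner (c *\<^sub>R x - c *\<^sub>R oproj S x) w = 0"
      unfolding e inner_scaleR_left using oproj(2)[OF assms w] by simp
  qed
qed

lemma oproj_zero_iff:
  assumes "subspace S"
  shows "oproj S x = 0 \<longleftrightarrow> (\<forall>w\<in>S. inner x w = 0)"
proof
  assume h: "oproj S x = 0" then show "\<forall>w\<in>S. inner x w = 0" using oproj(2)[OF assms, where x=x] by simp
next
  assume "\<forall>w\<in>S. inner x w = 0"
  then show "oproj S x = 0" by (intro oproj_unique[OF assms]) (auto simp: subspace_0[OF assms])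
qed

lemma oproj_comm:
  assumes "subspace S" "linear f" "f ` S \<subseteq> S" "\<And>u w. inner (f u) w = - inner u (f w)"
  shows "oproj S (f x) = f (oproj S x)"
proof (rule oproj_unique[OF assms(1)])
  show "f (oproj S x) \<in> S" using oproj[OF assms(1)] assms(3) by blast
  fix w assume w: "w \<in> S"
  have "inner (f x - f (oproj S x)) w = inner (f (x - oproj S x)) w"
    by (simp add: linear_diff[OF assms(2)])
  also have "\<dots> = - inner (x - oproj S x) (f w)" by (rule assms(4))
  also have "\<dots> = 0" using oproj(2)[OF assms(1)] w assms(3) by auto
  finally show "inner (f x - f (oproj S x)) w = 0" .
qed


lemma inv_span:
  assumes lin: "\<forall>i<m. linear (J i)" and inv: "\<forall>k\<in>I. invariant_subspace m J (W k)"
  shows "invariant_subspace m J (span (\<Union>k\<in>I. W k))"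
  unfolding invariant_subspace_def
proof (intro conjI allI impI)
  show "subspace (span (\<Union> (W ` I)))" by simp
  fix i assume i: "i < m"
  have "J i ` span (\<Union> (W ` I)) = span (J i ` \<Union> (W ` I))"
    using lin i by (simp add: span_linear_image)
  also have "\<dots> \<subseteq> span (\<Union> (W ` I))"
    using inv i unfolding invariant_subspace_def by (intro span_mono) blast
  finally show "J i ` span (\<Union> (W ` I)) \<subseteq> span (\<Union> (W ` I))" .
qed

lemma orth_span:
  assumes "\<forall>k\<in>I. \<forall>w\<in>W k. inner x w = 0" "y \<in> span (\<Union>k\<in>I. W k)"
  shows "inner x y = 0"
  using orthogonal_to_span[OF assms(2), of x] assms(1) by (auto simp: orthogonal_def)

lemma count:
  fixes W U :: "nat \<Rightarrow> 'v::euclidean_space set" and \<phi> :: "'v \<Rightarrow> 'v"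
  assumes lin: "\<forall>i<m. linear (J i)" and skew: "\<forall>i<m. \<forall>u w. inner (J i u) w = - inner u (J i w)"
    and "finite I"
  shows "finite I' \<Longrightarrow> (\<forall>k\<in>I. irreducible_submodule m J (W k)) \<Longrightarrow>
    (\<forall>k\<in>I. \<forall>l\<in>I. k \<noteq> l \<longrightarrow> (\<forall>u\<in>W k. \<forall>w\<in>W l. inner u w = 0)) \<Longrightarrow>
    (\<forall>l\<in>I'. invariant_subspace m J (U l) \<and> U l \<noteq> {0}) \<Longrightarrow>
    (\<forall>k\<in>I'. \<forall>l\<in>I'. k \<noteq> l \<longrightarrow> (\<forall>u\<in>U k. \<forall>w\<in>U l. inner u w = 0)) \<Longrightarrow>
    linear \<phi> \<Longrightarrow> \<sigma> \<noteq> 0 \<Longrightarrow> (\<forall>i<m. \<forall>y. \<phi> (J i y) = \<sigma> *\<^sub>R J i (\<phi> y)) \<Longrightarrow>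
    (\<forall>y\<in>span (\<Union>l\<in>I'. U l). \<phi> y = 0 \<longrightarrow> y = 0) \<Longrightarrow>
    \<phi> ` span (\<Union>l\<in>I'. U l) \<subseteq> span (\<Union>k\<in>I. W k) \<Longrightarrow> card I' \<le> card I"
  using assms(3)
proof (induction I arbitrary: I' \<phi> rule: finite_induct)
  case empty
  show ?case
  proof (rule ccontr)
    assume c: "\<not> card I' \<le> card {}"
    have "I' \<noteq> {}" using c by (cases "I' = {}") simp_all
    then obtain l where l: "l \<in> I'" by blast
    have inv: "invariant_subspace m J (U l) \<and> U l \<noteq> {0}" by (rule bspec[OF empty.prems(4) l])
    have "0 \<in> U l" using inv unfolding invariant_subspace_def by (simp add: subspace_0)
    then obtain u where u: "u \<in> U l" "u \<noteq> 0" using inv by blast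
    have uY: "u \<in> span (\<Union>l\<in>I'. U l)" by (rule span_base) (use l u in blast)
    have "\<phi> u \<in> span (\<Union>k\<in>{}. W k)" using empty.prems(10) uY by blast
    then have "\<phi> u = 0" by simp
    then have "u = 0" using empty.prems(9) uY by blast
    with u show False by simp
  qed
next
  case (insert k I)
  let ?X = "span (\<Union>j\<in>I. W j)"
  let ?Y = "span (\<Union>l\<in>I'. U l)"
  define P where "P = oproj ?X"
  have Xinv: "invariant_subspace m J ?X"
    using inv_span[OF lin, of I W] insert.prems(2) by (auto simp: irreducible_submodule_def)
  have Xsub: "subspace ?X" by simp
  have Wk: "irreducible_submodule m J (W k)" using insert.prems(2) by auto
  then have Wksub: "subspace (W k)" and Wkinv: "\<forall>i<m. J i ` W k \<subseteq> W k"
    by (auto simp: irreducible_submodule_def invariant_subspace_def)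
  have Yinv: "invariant_subspace m J ?Y"
    using inv_span[OF lin, of I' U] insert.prems(4) by auto
  have Plin: "linear P" unfolding P_def by (rule oproj_linear[OF Xsub])
  have Pcomm: "P (J i x) = J i (P x)" if "i < m" for i x
    unfolding P_def
    using Xinv that lin skew by (intro oproj_comm) (auto simp: invariant_subspace_def)
  have PX: "P x \<in> ?X" for x unfolding P_def by (rule oproj(1)[OF Xsub])
  have rest: "x - P x \<in> W k" if x: "x \<in> span (\<Union>j\<in>insert k I. W j)" for x
  proof -
    have "x \<in> span ((\<Union>j\<in>I. W j) \<union> W k)" using x by (simp add: Un_commute)
    then obtain a b where ab: "x = a + b" "a \<in> ?X" "b \<in> span (W k)"
      unfolding span_Un by blast
    have b: "b \<in> W k" using ab(3) Wksub by (metis span_eq_iff)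
    have bo: "inner b w = 0" if "w \<in> ?X" for w
    proof (rule orth_span[OF _ that])
      show "\<forall>j\<in>I. \<forall>w\<in>W j. inner b w = 0"
        using insert.prems(3) insert.hyps(2) b by (metis insertCI)
    qed
    have "P x = a" unfolding P_def
      using ab bo by (intro oproj_unique[OF Xsub]) auto
    then show ?thesis using ab b by simp
  qed
  have Ysub: "subspace ?Y" by simp
  have phi0: "\<phi> 0 = 0" using insert.prems(6) by (simp add: linear_0)
  have phiinj: "y = z" if "y \<in> ?Y" "z \<in> ?Y" "\<phi> y = \<phi> z" for y z
  proof -
    have "\<phi> (y - z) = 0" using that insert.prems(6) by (simp add: linear_diff)
    moreover have "y - z \<in> ?Y" using that by (simp add: span_diff)
    ultimately show ?thesis using insert.prems(9) by auto
  qed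
  show ?case
  proof (cases "\<forall>y\<in>?Y. \<phi> y \<in> W k \<longrightarrow> \<phi> y = 0")
    case True
    have "card I' \<le> card I"
    proof (rule insert.IH[of I' "P \<circ> \<phi>"])
      show "finite I'" by fact
      show "\<forall>k\<in>I. irreducible_submodule m J (W k)" using insert.prems(2) by auto
      show "\<forall>ka\<in>I. \<forall>l\<in>I. ka \<noteq> l \<longrightarrow> (\<forall>u\<in>W ka. \<forall>w\<in>W l. u \<bullet> w = 0)"
        using insert.prems(3) by auto
      show "\<forall>l\<in>I'. invariant_subspace m J (U l) \<and> U l \<noteq> {0}" by fact
      show "\<forall>k\<in>I'. \<forall>l\<in>I'. k \<noteq> l \<longrightarrow> (\<forall>u\<in>U k. \<forall>w\<in>U l. u \<bullet> w = 0)" by fact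
      show "linear (P \<circ> \<phi>)" using Plin insert.prems(6) by (simp add: linear_compose)
      show "\<sigma> \<noteq> 0" by fact
      show "\<forall>i<m. \<forall>y. (P \<circ> \<phi>) (J i y) = \<sigma> *\<^sub>R J i ((P \<circ> \<phi>) y)"
        using insert.prems(8) Pcomm Plin by (simp add: linear_scale)
      show "\<forall>y\<in>?Y. (P \<circ> \<phi>) y = 0 \<longrightarrow> y = 0"
      proof (intro ballI impI)
        fix y assume y: "y \<in> ?Y" "(P \<circ> \<phi>) y = 0"
        have "\<phi> y \<in> span (\<Union>j\<in>insert k I. W j)" using y insert.prems(10) by auto
        from rest[OF this] y(2) have "\<phi> y \<in> W k" by simp
        then have "\<phi> y = 0" using True y by auto
        then show "y = 0" using insert.prems(9) y by auto
      qed
      show "(P \<circ> \<phi>) ` ?Y \<subseteq> ?X" using PX by auto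
    qed
    then show ?thesis using insert.hyps by simp
  next
    case False
    then obtain y0 where y0: "y0 \<in> ?Y" "\<phi> y0 \<in> W k" "\<phi> y0 \<noteq> 0" by auto
    have y0nz: "y0 \<noteq> 0" using y0 phi0 by auto
    have "\<exists>l\<in>I'. oproj (U l) y0 \<noteq> 0"
    proof (rule ccontr)
      assume a0: "\<not> ?thesis"
      have "\<forall>w\<in>U l. inner y0 w = 0" if l: "l \<in> I'" for l
      proof -
        have "subspace (U l)" using insert.prems(4) l by (simp add: invariant_subspace_def)
        moreover have "oproj (U l) y0 = 0" using a0 l by blast
        ultimately show ?thesis using oproj_zero_iff by blast
      qed
      then have "\<forall>l\<in>I'. \<forall>w\<in>U l. inner y0 w = 0" by blast
      from orth_span[OF this y0(1)] y0nz show False by simp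
    qed
    then obtain l where l: "l \<in> I'" "oproj (U l) y0 \<noteq> 0" by blast
    have Ul: "subspace (U l)" "\<forall>i<m. J i ` U l \<subseteq> U l"
      using insert.prems(4) l by (auto simp: invariant_subspace_def)
    define Z where "Z = {y\<in>?Y. \<phi> y \<in> W k \<and> oproj (U l) y = 0}"
    have Zsub: "subspace Z"
      unfolding Z_def subspace_def
      using oproj_linear[OF Ul(1)] insert.prems(6) Wksub
      by (auto simp: span_add span_scale linear_add linear_scale linear_0
          subspace_add subspace_scale subspace_0)
    have Zinv: "J i z \<in> Z" if "i < m" "z \<in> Z" for i z
    proof -
      have "J i z \<in> ?Y" using Yinv that unfolding Z_def invariant_subspace_def by blast
      moreover have "\<phi> (J i z) \<in> W k"
      proof -
        have "\<phi> z \<in> W k" using that(2) unfolding Z_def by blast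
        then have "J i (\<phi> z) \<in> W k" using Wkinv that(1) by blast
        then have "\<sigma> *\<^sub>R J i (\<phi> z) \<in> W k" using Wksub by (simp add: subspace_scale)
        then show ?thesis using insert.prems(8) that(1) by simp
      qed
      moreover have "oproj (U l) (J i z) = 0"
        using oproj_comm[OF Ul(1), of "J i"] lin skew Ul(2) that unfolding Z_def
        by (auto simp: linear_0)
      ultimately show ?thesis unfolding Z_def by blast
    qed
    have phiZinv: "invariant_subspace m J (\<phi> ` Z)"
      unfolding invariant_subspace_def
    proof (intro conjI allI impI)
      show "subspace (\<phi> ` Z)" using insert.prems(6) Zsub by (rule linear_subspace_image)
      fix i assume i: "i < m"
      show "J i ` \<phi> ` Z \<subseteq> \<phi> ` Z"
      proof
        fix x assume "x \<in> J i ` \<phi> ` Z"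
        then obtain z where z: "z \<in> Z" "x = J i (\<phi> z)" by blast
        have "\<phi> ((1/\<sigma>) *\<^sub>R J i z) = x"
          using insert.prems(6,7,8) i z by (simp add: linear_scale)
        moreover have "(1/\<sigma>) *\<^sub>R J i z \<in> Z" using Zsub Zinv[OF i z(1)] by (simp add: subspace_scale)
        ultimately show "x \<in> \<phi> ` Z" by blast
      qed
    qed
    have "\<phi> ` Z \<subseteq> W k" unfolding Z_def by auto
    then have "\<phi> ` Z = {0} \<or> \<phi> ` Z = W k" using Wk phiZinv unfolding irreducible_submodule_def by blast
    moreover have "\<phi> ` Z \<noteq> W k"
    proof
      assume "\<phi> ` Z = W k"
      then obtain z where "z \<in> Z" "\<phi> z = \<phi> y0" using y0(2) by (metis imageE)
      then have "z = y0" using phiinj y0(1) unfolding Z_def by blast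
      then show False using \<open>z \<in> Z\<close> l(2) unfolding Z_def by blast
    qed
    ultimately have phiZ: "\<phi> ` Z = {0}" by blast
    have Zker: "y = 0" if "y \<in> ?Y" "\<phi> y \<in> W k" "oproj (U l) y = 0" for y
    proof -
      have "y \<in> Z" using that unfolding Z_def by blast
      then have "\<phi> y = 0" using phiZ by blast
      then show ?thesis using insert.prems(9) that by blast
    qed
    let ?I'' = "I' - {l}"
    let ?Y'' = "span (\<Union>j\<in>?I''. U j)"
    have Y''Y: "?Y'' \<subseteq> ?Y" by (intro span_mono) auto
    have "card ?I'' \<le> card I"
    proof (rule insert.IH[of "I' - {l}" "P \<circ> \<phi>"])
      show "finite ?I''" using insert.prems(1) by simp
      show "\<forall>k\<in>I. irreducible_submodule m J (W k)" using insert.prems(2) by auto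
      show "\<forall>ka\<in>I. \<forall>l\<in>I. ka \<noteq> l \<longrightarrow> (\<forall>u\<in>W ka. \<forall>w\<in>W l. u \<bullet> w = 0)"
        using insert.prems(3) by auto
      show "\<forall>l\<in>?I''. invariant_subspace m J (U l) \<and> U l \<noteq> {0}" using insert.prems(4) by auto
      show "\<forall>k\<in>?I''. \<forall>l\<in>?I''. k \<noteq> l \<longrightarrow> (\<forall>u\<in>U k. \<forall>w\<in>U l. u \<bullet> w = 0)"
        using insert.prems(5) by auto
      show "linear (P \<circ> \<phi>)" using Plin insert.prems(6) by (simp add: linear_compose)
      show "\<sigma> \<noteq> 0" by fact
      show "\<forall>i<m. \<forall>y. (P \<circ> \<phi>) (J i y) = \<sigma> *\<^sub>R J i ((P \<circ> \<phi>) y)"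
        using insert.prems(8) Pcomm Plin by (simp add: linear_scale)
      show "\<forall>y\<in>?Y''. (P \<circ> \<phi>) y = 0 \<longrightarrow> y = 0"
      proof (intro ballI impI)
        fix y assume y: "y \<in> ?Y''" "(P \<circ> \<phi>) y = 0"
        have yY: "y \<in> ?Y" using y Y''Y by auto
        have "\<phi> y \<in> span (\<Union>j\<in>insert k I. W j)" using yY insert.prems(10) by auto
        from rest[OF this] y(2) have "\<phi> y \<in> W k" by simp
        moreover have "oproj (U l) y = 0"
        proof -
          have "\<forall>j\<in>?I''. \<forall>w\<in>U j. inner w' w = 0" if "w' \<in> U l" for w'
            using insert.prems(5) l(1) that by (metis DiffE insertCI)
          then have "inner w' y = 0" if "w' \<in> U l" for w'
            using orth_span[OF _ y(1)] that by blast
          then show ?thesis using oproj_zero_iff[OF Ul(1)] by (simp add: inner_commute)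
        qed
        ultimately show "y = 0" using Zker yY by blast
      qed
      show "(P \<circ> \<phi>) ` ?Y'' \<subseteq> ?X" using PX by auto
    qed
    moreover have "card I' = Suc (card ?I'')" using l(1) insert.prems(1)
      by (metis card_Suc_Diff1)
    ultimately show ?thesis using insert.hyps by simp
  qed
qed


lemma foldr_comp: "foldr (\<circ>) xs g = foldr (\<circ>) xs id \<circ> g"
  by (induction xs) (auto simp: comp_assoc)

lemma Kop_Suc:
  fixes J :: "nat \<Rightarrow> 'v::euclidean_space \<Rightarrow> 'v"
  shows "K_op (Suc n) J = K_op n J \<circ> J n"
  unfolding K_op_def by (simp add: foldr_comp[of _ "J n"])

lemma Kop_linear:
  fixes J :: "nat \<Rightarrow> 'v::euclidean_space \<Rightarrow> 'v"
  shows "\<forall>i<n. linear (J i) \<Longrightarrow> linear (K_op n J)"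
proof (induction n)
  case 0 then show ?case unfolding K_op_def by (simp add: linear_iff)
next
  case (Suc n)
  have "linear (J n)" "linear (K_op n J)" using Suc by auto
  then show ?case unfolding Kop_Suc by (rule linear_compose)
qed

lemma Kop_anti:
  fixes J :: "nat \<Rightarrow> 'v::euclidean_space \<Rightarrow> 'v"
  assumes "\<forall>i<n. linear (J i)" "\<forall>i<n. \<forall>x. R (J i x) = - J i (R x)" "linear R"
  shows "R (K_op n J x) = (-1)^n *\<^sub>R K_op n J (R x)"
  using assms
proof (induction n arbitrary: x)
  case 0 then show ?case by (simp add: K_op_def)
next
  case (Suc n)
  have "R (K_op (Suc n) J x) = R (K_op n J (J n x))" by (simp add: Kop_Suc)
  also have "\<dots> = (-1)^n *\<^sub>R K_op n J (R (J n x))" using Suc by simp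
  also have "\<dots> = (-1)^n *\<^sub>R K_op n J (- J n (R x))" using Suc.prems by simp
  also have "\<dots> = (-1)^(Suc n) *\<^sub>R K_op n J (J n (R x))"
    using Kop_linear[of n J] Suc.prems by (simp add: linear_neg)
  finally show ?case by (simp add: Kop_Suc)
qed

lemma eq_on_span:
  assumes "linear f" "\<forall>x\<in>S. f x = c *\<^sub>R x" "x \<in> span S"
  shows "f x = c *\<^sub>R x"
  by (rule linear_eq_on_span[OF assms(1) linear_scaleR _ assms(3)]) (use assms(2) in auto)

theorem proposition5p7:
  fixes m p_plus p_minus :: nat and J :: "nat \<Rightarrow> 'v::euclidean_space \<Rightarrow> 'v"
  assumes "m mod 8 = 3"
    and "clifford_module m J"
    and "module_type m J p_plus p_minus"
    and "Lag m J \<noteq> {}"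
  shows "p_plus = p_minus"
proof -
  note cm = assms(2)[unfolded clifford_module_def]
  have lin: "\<forall>i<m. linear (J i)" using cm by (rule conjunct1)
  have JJ: "\<forall>i<m. \<forall>u. J i (J i u) = - u" using cm[THEN conjunct2] by (rule conjunct1)
  have skew: "\<forall>i<m. \<forall>u w. inner (J i u) w = - inner u (J i w)"
    using cm[THEN conjunct2, THEN conjunct2] by (rule conjunct2)
  have modd: "odd m" using assms(1) by presburger
  let ?n = "p_plus + p_minus"
  from assms(3)[unfolded module_type_def] obtain W :: "nat \<Rightarrow> 'v set" where
    Wall: "(\<forall>k < ?n. irreducible_submodule m J (W k)) \<and>
     (\<forall>k < p_plus. \<forall>u \<in> W k. K_op m J u = u) \<and>
     (\<forall>k. p_plus \<le> k \<and> k < ?n \<longrightarrow> (\<forall>u \<in> W k. K_op m J u = - u)) \<and>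
     (\<forall>k < ?n. \<forall>l < ?n. k \<noteq> l \<longrightarrow> (\<forall>u \<in> W k. \<forall>w \<in> W l. inner u w = 0)) \<and>
     span (\<Union>k < ?n. W k) = UNIV" ..
  have Wirr: "\<forall>k < ?n. irreducible_submodule m J (W k)" using Wall by (rule conjunct1)
  have Wp: "\<forall>k < p_plus. \<forall>u \<in> W k. K_op m J u = u" using Wall[THEN conjunct2] by (rule conjunct1)
  have Wm: "\<forall>k. p_plus \<le> k \<and> k < ?n \<longrightarrow> (\<forall>u \<in> W k. K_op m J u = - u)"
    using Wall[THEN conjunct2, THEN conjunct2] by (rule conjunct1)
  have Worth: "\<forall>k < ?n. \<forall>l < ?n. k \<noteq> l \<longrightarrow> (\<forall>u \<in> W k. \<forall>w \<in> W l. inner u w = 0)"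
    using Wall[THEN conjunct2, THEN conjunct2, THEN conjunct2] by (rule conjunct1)
  have Wspan: "span (\<Union>k < ?n. W k) = UNIV"
    using Wall[THEN conjunct2, THEN conjunct2, THEN conjunct2] by (rule conjunct2)
  from assms(4) obtain L where "L \<in> Lag m J" by blast
  then have L: "subspace L" "\<forall>u\<in>L. \<forall>w\<in>L. heis_bracket m J u w = (\<lambda>_. 0)"
    "2 * dim L = DIM('v)"
    unfolding Lag_def by auto
  have JL: "inner (J i u) w = 0" if "i < m" "u \<in> L" "w \<in> L" for i u w
    using fun_cong[OF L(2)[rule_format, OF that(2,3)], of i] that(1)
    by (simp add: heis_bracket_def)
  define Lp where "Lp = {y. \<forall>x\<in>L. orthogonal x y}"
  have Lpsub: "subspace Lp" unfolding Lp_def subspace_def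
    by (auto simp: orthogonal_clauses)
  have "dim Lp + dim L = dim (UNIV :: 'v set)"
    using dim_subspace_orthogonal_to_vectors[OF L(1) subspace_UNIV, of] unfolding Lp_def by simp
  then have dLp: "dim Lp = dim L" using L(3) by simp
  have JLeq: "J i ` L = Lp" if i: "i < m" for i
  proof (rule subspace_dim_equal)
    show "subspace (J i ` L)" using lin i L(1) by (simp add: linear_subspace_image)
    show "subspace Lp" by fact
    show "J i ` L \<subseteq> Lp" unfolding Lp_def orthogonal_def
      using JL i by (auto simp: inner_commute)
    have "inj_on (J i) (span L)"
    proof (rule inj_onI)
      fix x y assume "J i x = J i y"
      then have "J i (J i x) = J i (J i y)" by simp
      then show "x = y" using JJ i by simp
    qed
    then have "dim (J i ` L) = dim L" using lin i by (intro dim_image_eq) auto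
    then show "dim Lp \<le> dim (J i ` L)" using dLp by simp
  qed
  have JLp: "J i v \<in> L" if i: "i < m" and v: "v \<in> Lp" for i v
  proof -
    obtain u where "u \<in> L" "v = J i u" using JLeq[OF i] v by blast
    then show ?thesis using JJ i L(1) by (simp add: subspace_neg)
  qed
  define Pr where "Pr = oproj L"
  have Pilin: "linear Pr" unfolding Pr_def by (rule oproj_linear[OF L(1)])
  have PiL: "Pr x \<in> L" for x unfolding Pr_def by (rule oproj(1)[OF L(1)])
  have PiLp: "x - Pr x \<in> Lp" for x
    using oproj(2)[OF L(1), where x=x] unfolding Lp_def Pr_def orthogonal_def
    by (simp add: inner_commute)
  have PiPi: "Pr (Pr x) = Pr x" for x unfolding Pr_def by (rule oproj_id[OF L(1) oproj(1)[OF L(1)]])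
  have PiJ: "Pr (J i x) = J i x - J i (Pr x)" if i: "i < m" for i x
  proof -
    have "oproj L (J i x) = J i (x - Pr x)"
    proof (rule oproj_unique[OF L(1)])
      show "J i (x - Pr x) \<in> L" using JLp[OF i PiLp] .
      fix w assume w: "w \<in> L"
      have "J i x - J i (x - Pr x) = J i (Pr x)" using lin i by (simp add: linear_diff)
      then show "inner (J i x - J i (x - Pr x)) w = 0" using JL[OF i PiL w] by simp
    qed
    then have "Pr (J i x) = J i (x - Pr x)" unfolding Pr_def .
    then show ?thesis using lin i by (simp add: linear_diff)
  qed
  define R where "R x = 2 *\<^sub>R Pr x - x" for x
  have Rlin: "linear R"
  proof (rule linearI)
    fix x y show "R (x + y) = R x + R y"
      unfolding R_def using Pilin by (simp add: linear_add algebra_simps)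
  next
    fix c :: real and x show "R (c *\<^sub>R x) = c *\<^sub>R R x"
      unfolding R_def using Pilin by (simp add: linear_scale algebra_simps)
  qed
  have RR: "R (R x) = x" for x
  proof -
    have "Pr (R x) = 2 *\<^sub>R Pr (Pr x) - Pr x"
      unfolding R_def using Pilin by (simp add: linear_diff linear_scale)
    also have "\<dots> = Pr x" by (simp add: PiPi scaleR_2)
    finally show ?thesis unfolding R_def by simp
  qed
  have RJ: "R (J i x) = - J i (R x)" if "i < m" for i x
  proof -
    have "R (J i x) = 2 *\<^sub>R (J i x - J i (Pr x)) - J i x" unfolding R_def using PiJ[OF that] by simp
    also have "\<dots> = J i x - 2 *\<^sub>R J i (Pr x)" by (simp add: algebra_simps scaleR_2)
    also have "\<dots> = - J i (R x)" unfolding R_def using lin that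
      by (simp add: linear_diff linear_scale algebra_simps)
    finally show ?thesis .
  qed
  have RK: "R (K_op m J x) = - K_op m J (R x)" for x
    using Kop_anti[of m J R x] lin RJ Rlin modd by simp
  have Klin: "linear (K_op m J)" using Kop_linear lin by blast
  define Vp where "Vp = span (\<Union>k\<in>{..<p_plus}. W k)"
  define Vm where "Vm = span (\<Union>k\<in>{p_plus..<?n}. W k)"
  have KVp: "K_op m J x = x" if "x \<in> Vp" for x
  proof -
    have "\<forall>y\<in>(\<Union>k\<in>{..<p_plus}. W k). K_op m J y = 1 *\<^sub>R y" using Wp by auto
    then have "K_op m J x = 1 *\<^sub>R x" by (rule eq_on_span[OF Klin _ that[unfolded Vp_def]])
    then show ?thesis by simp
  qed
  have KVm: "K_op m J x = - x" if "x \<in> Vm" for x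
  proof -
    have "\<forall>y\<in>(\<Union>k\<in>{p_plus..<?n}. W k). K_op m J y = (-1) *\<^sub>R y" using Wm by auto
    then have "K_op m J x = (-1) *\<^sub>R x" by (rule eq_on_span[OF Klin _ that[unfolded Vm_def]])
    then show ?thesis by simp
  qed
  have dec: "\<exists>a b. x = a + b \<and> a \<in> Vp \<and> b \<in> Vm" for x
  proof -
    have "(\<Union>k<?n. W k) = (\<Union>k\<in>{..<p_plus}. W k) \<union> (\<Union>k\<in>{p_plus..<?n}. W k)"
    proof -
      have e: "{..<?n} = {..<p_plus} \<union> {p_plus..<?n}" by auto
      show ?thesis by (simp only: e UN_Un)
    qed
    then have "x \<in> span ((\<Union>k\<in>{..<p_plus}. W k) \<union> (\<Union>k\<in>{p_plus..<?n}. W k))"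
      using Wspan by simp
    then show ?thesis unfolding span_Un Vp_def Vm_def by blast
  qed
  have toVm: "v \<in> Vm" if "K_op m J v = - v" for v
  proof -
    obtain a b where ab: "v = a + b" "a \<in> Vp" "b \<in> Vm" using dec by blast
    then have "K_op m J v = a - b" using KVp KVm Klin by (simp add: linear_add)
    then have eq: "a - b = - a - b" using that ab(1) by simp
    have "a + a = (a - b) - (- a - b)" by (simp add: algebra_simps)
    also have "\<dots> = 0" using eq by simp
    finally have "a + a = 0" .
    then have "2 *\<^sub>R a = 0" by (simp add: scaleR_2)
    then have "a = 0" by simp
    then show ?thesis using ab by simp
  qed
  have toVp: "v \<in> Vp" if "K_op m J v = v" for v
  proof -
    obtain a b where ab: "v = a + b" "a \<in> Vp" "b \<in> Vm" using dec by blast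
    then have "K_op m J v = a - b" using KVp KVm Klin by (simp add: linear_add)
    then have eq: "a - b = a + b" using that ab(1) by simp
    have "b + b = (a + b) - (a - b)" by (simp add: algebra_simps)
    also have "\<dots> = 0" using eq by simp
    finally have "b + b = 0" .
    then have "2 *\<^sub>R b = 0" by (simp add: scaleR_2)
    then have "b = 0" by simp
    then show ?thesis using ab by simp
  qed
  have RVp: "R ` Vp \<subseteq> Vm"
  proof
    fix y assume "y \<in> R ` Vp"
    then obtain x where x: "x \<in> Vp" "y = R x" by blast
    have "K_op m J y = - R (K_op m J x)" using RK[of x] x(2) by simp
    also have "\<dots> = - y" using KVp[OF x(1)] x(2) by simp
    finally have "K_op m J y = - y" .
    then show "y \<in> Vm" by (rule toVm)
  qed
  have RVm: "R ` Vm \<subseteq> Vp"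
  proof
    fix y assume "y \<in> R ` Vm"
    then obtain x where x: "x \<in> Vm" "y = R x" by blast
    have "K_op m J y = - R (K_op m J x)" using RK[of x] x(2) by simp
    also have "\<dots> = y" using KVm[OF x(1)] x(2) Rlin by (simp add: linear_neg)
    finally have "K_op m J y = y" .
    then show "y \<in> Vp" by (rule toVp)
  qed
  have Rker: "y = 0" if "R y = 0" for y using RR[of y] that Rlin by (simp add: linear_0)
  have Rint: "\<forall>i<m. \<forall>y. R (J i y) = (-1) *\<^sub>R J i (R y)" using RJ by simp
  have irrI: "\<forall>k\<in>I. irreducible_submodule m J (W k)" if "I \<subseteq> {..<?n}" for I
    using Wirr that by auto
  have orthI: "\<forall>k\<in>I. \<forall>l\<in>I. k \<noteq> l \<longrightarrow> (\<forall>u\<in>W k. \<forall>w\<in>W l. inner u w = 0)" if "I \<subseteq> {..<?n}" for I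
    using Worth that by blast
  have invI: "\<forall>l\<in>I. invariant_subspace m J (W l) \<and> W l \<noteq> {0}" if "I \<subseteq> {..<?n}" for I
    using irrI[OF that] by (auto simp: irreducible_submodule_def)
  have "card {..<p_plus} \<le> card {p_plus..<?n}"
    by (rule count[OF lin skew _ _ irrI orthI invI orthI Rlin _ Rint])
      (use RVp Rker in \<open>auto simp: Vp_def Vm_def\<close>)
  moreover have "card {p_plus..<?n} \<le> card {..<p_plus}"
    by (rule count[OF lin skew _ _ irrI orthI invI orthI Rlin _ Rint])
      (use RVm Rker in \<open>auto simp: Vp_def Vm_def\<close>)
  ultimately show ?thesis by simp
qed

end
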